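(* Let $X$ and $Y$ be uncertain variables on a common set $\Omega$ with finite ranges. Then $$I_\star(X;Y)\;=\;\sup_{g}\ \mathcal{L}(g\circ X\rightarrow Y)\;\leq\; \mathcal{L}_\star(X\rightarrow Y),$$ where the supremum ranges over all finite sets $\mathcal{U}$ and all functions $g:[\![X]\!]\to\mathcal{U}$ such that $|[\![g\circ X\mid Y(\omega)=y]\!]|=|\{g(x):x\in[\![X\mid Y(\omega)=y]\!]\}|=1$ for every $y\in[\![Y]\!]$.
   Context: Let $\Omega$ be a set. An uncertain variable (uv) is a map $X:\Omega\to\mathbb{X}$ into some set; all uvs considered have finite ranges. The range of $X$ is $[\![X]\!]:=\{X(\omega):\omega\in\Omega\}$; the conditional range is $[\![X\mid Y(\omega)=y]\!]:=\{X(\omega):\omega\in\Omega,\ Y(\omega)=y\}$. Two points $x,x'\in[\![X]\!]$ are overlap connected if there is a finite sequence $y_1,\dots,y_n\in[\![Y]\!]$ with $x\in[\![X\mid Y(\omega)=y_1]\!]$, $x'\in[\![X\mid Y(\omega)=y_n]\!]$ and $[\![X\mid Y(\omega)=y_i]\!]\cap[\![X\mid Y(\omega)=y_{i+1}]\!]\neq\emptyset$ for $i=1,\dots,n-1$. The overlap partition $[\![X\mid Y]\!]_\star$ is the (unique) partition of $[\![X]\!]$ into the equivalence classes of this relation (each class is overlap connected and points in different classes are not overlap connected). The maximin information is $I_\star(X;Y):=\log_2|[\![X\mid Y]\!]_\star|$. The non-stochastic brute-force guessing leakage from a uv $U$ to a uv $Y$ is $$\mathcal{L}(U\rightarrow Y):=\log_2\left(\frac{|[\![U]\!]|}{\min_{y\in[\![Y]\!]}|[\![U\mid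 Y(\omega)=y]\!]|}\right).$$ The maximal non-stochastic brute-force leakage from $X$ to $Y$ is $$\mathcal{L}_\star(X\rightarrow Y):=\sup_{g}\ \mathcal{L}(g\circ X\rightarrow Y),$$ where the supremum ranges over all finite sets $\mathcal{U}$ and all functions $g:[\![X]\!]\to\mathcal{U}$. *)

theory Defs
  imports Complex_Main
begin

text \<open>Uncertain variables are maps out of a sample type 'w (playing the role of \<Omega>).
  The range of X is range X.\<close>

definition cond_range :: "('w \<Rightarrow> 'x) \<Rightarrow> ('w \<Rightarrow> 'y) \<Rightarrow> 'y \<Rightarrow> 'x set" where
  "cond_range X Y y = {X w | w. Y w = y}"

definition overlap_connected ::
    "('w \<Rightarrow> 'x) \<Rightarrow> ('w \<Rightarrow> 'y) \<Rightarrow> 'x \<Rightarrow> 'x \<Rightarrow> bool" where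
  "overlap_connected X Y x x' \<longleftrightarrow>
     (\<exists>ys. ys \<noteq> [] \<and> set ys \<subseteq> range Y \<and>
        x \<in> cond_range X Y (hd ys) \<and> x' \<in> cond_range X Y (last ys) \<and>
        (\<forall>i. i + 1 < length ys \<longrightarrow>
           cond_range X Y (ys ! i) \<inter> cond_range X Y (ys ! (i + 1)) \<noteq> {}))"

definition overlap_partition :: "('w \<Rightarrow> 'x) \<Rightarrow> ('w \<Rightarrow> 'y) \<Rightarrow> 'x set set" where
  "overlap_partition X Y =
     {{x' \<in> range X. overlap_connected X Y x x'} | x. x \<in> range X}"

definition maximin_info :: "('w \<Rightarrow> 'x) \<Rightarrow> ('w \<Rightarrow> 'y) \<Rightarrow> real" where
  "maximin_info X Y = log 2 (real (card (overlap_partition X Y)))"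

definition bf_leakage :: "('w \<Rightarrow> 'u) \<Rightarrow> ('w \<Rightarrow> 'y) \<Rightarrow> real" where
  "bf_leakage U Y =
     log 2 (real (card (range U)) /
            real (Min ((\<lambda>y. card (cond_range U Y y)) ` range Y)))"

text \<open>Any finite set embeds injectively into nat, and the leakage is invariant under injective
  relabelling, so the codomain is taken to be nat (image on range X is automatically finite).\<close>
definition max_bf_leakage :: "('w \<Rightarrow> 'x) \<Rightarrow> ('w \<Rightarrow> 'y) \<Rightarrow> real" where
  "max_bf_leakage X Y = Sup {bf_leakage (g \<circ> X) Y | g :: 'x \<Rightarrow> nat. True}"

end

theory Submission
  imports Defs
begin

lemma oc_const:
  assumes oc: "overlap_connected X Y x x'"
    and c: "\<forall>y\<in>range Y. \<forall>a\<in>cond_range X Y y. \<forall>b\<in>cond_range X Y y. g a = g b"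
  shows "g x = g x'"
proof -
  obtain ys where ys: "ys \<noteq> []" "set ys \<subseteq> range Y" "x \<in> cond_range X Y (hd ys)"
    "x' \<in> cond_range X Y (last ys)"
    "\<forall>i. i + 1 < length ys \<longrightarrow> cond_range X Y (ys ! i) \<inter> cond_range X Y (ys ! (i + 1)) \<noteq> {}"
    using oc unfolding overlap_connected_def by blast
  have mem: "\<And>i. i < length ys \<Longrightarrow> ys ! i \<in> range Y" using ys(2) nth_mem by blast
  have "\<forall>z\<in>cond_range X Y (ys!i). g z = g x" if "i < length ys" for i
    using that
  proof (induction i)
    case 0
    have "x \<in> cond_range X Y (ys!0)" using ys(3) ys(1) by (simp add: hd_conv_nth)
    then show ?case using c[rule_format, OF mem[of 0]] 0 by blast
  next
    case (Suc i)
    then obtain z0 where z0: "z0 \<in> cond_range X Y (ys ! i)" "z0 \<in> cond_range X Y (ys ! Suc i)"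
      using ys(5)[rule_format, of i] by auto
    have "g z0 = g x" using Suc z0 by auto
    then show ?case using c mem[OF Suc.prems] z0(2) by metis
  qed
  moreover have "last ys = ys ! (length ys - 1)" using ys(1) by (simp add: last_conv_nth)
  ultimately show ?thesis using ys(1,4) c mem[of "length ys - 1"]
    by (metis diff_less length_greater_0_conv zero_less_one)
qed

lemma oc_refl:
  assumes "x \<in> range X" shows "overlap_connected X Y x x"
proof -
  obtain w where "x = X w" using assms by auto
  then show ?thesis unfolding overlap_connected_def cond_range_def
    by (intro exI[of _ "[Y w]"]) auto
qed

lemma oc_prepend:
  assumes "overlap_connected X Y x1 x'" "x1 \<in> cond_range X Y y" "x2 \<in> cond_range X Y y"
    "y \<in> range Y"
  shows "overlap_connected X Y x2 x'"
proof -
  obtain ys where ys: "ys \<noteq> []" "set ys \<subseteq> range Y" "x1 \<in> cond_range X Y (hd ys)"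
    "x' \<in> cond_range X Y (last ys)"
    "\<forall>i. i + 1 < length ys \<longrightarrow> cond_range X Y (ys ! i) \<inter> cond_range X Y (ys ! (i + 1)) \<noteq> {}"
    using assms(1) unfolding overlap_connected_def by blast
  show ?thesis unfolding overlap_connected_def
  proof (intro exI[of _ "y # ys"] conjI allI impI)
    fix i assume i: "i + 1 < length (y # ys)"
    show "cond_range X Y ((y # ys) ! i) \<inter> cond_range X Y ((y # ys) ! (i + 1)) \<noteq> {}"
    proof (cases i)
      case 0
      then show ?thesis using assms(2) ys(1,3) by (auto simp: hd_conv_nth)
    next
      case (Suc j)
      then show ?thesis using ys(5)[rule_format, of j] i by auto
    qed
  qed (use ys assms in auto)
qed

definition cls :: "('w \<Rightarrow> 'x) \<Rightarrow> ('w \<Rightarrow> 'y) \<Rightarrow> 'x \<Rightarrow> 'x set" where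
  "cls X Y x = {x' \<in> range X. overlap_connected X Y x x'}"

lemma part_eq: "overlap_partition X Y = cls X Y ` range X"
  unfolding overlap_partition_def cls_def by auto

lemma cond_range_comp: "cond_range (g \<circ> X) Y y = g ` cond_range X Y y"
  unfolding cond_range_def by auto

lemma cond_range_ne: "y \<in> range Y \<Longrightarrow> cond_range X Y y \<noteq> {}"
  unfolding cond_range_def by auto

lemma cond_range_sub: "cond_range X Y y \<subseteq> range X"
  unfolding cond_range_def by auto

lemma card1_const:
  assumes "card (g ` A) = 1" "a \<in> A" "b \<in> A" shows "g a = g b"
  using assms by (metis card_1_singletonE image_eqI singletonD)

theorem proposition5:
  fixes X :: "'w \<Rightarrow> 'x" and Y :: "'w \<Rightarrow> 'y"
  assumes "finite (range X)" and "finite (range Y)"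
  shows "maximin_info X Y =
           Sup {bf_leakage (g \<circ> X) Y | g :: 'x \<Rightarrow> nat.
                  \<forall>y \<in> range Y. card (cond_range (g \<circ> X) Y y) = 1}
       \<and> Sup {bf_leakage (g \<circ> X) Y | g :: 'x \<Rightarrow> nat.
                  \<forall>y \<in> range Y. card (cond_range (g \<circ> X) Y y) = 1}
           \<le> max_bf_leakage X Y"
proof -
  let ?S = "{bf_leakage (g \<circ> X) Y | g :: 'x \<Rightarrow> nat.
                  \<forall>y \<in> range Y. card (cond_range (g \<circ> X) Y y) = 1}"
  let ?P = "overlap_partition X Y"
  have finP: "finite ?P" using assms(1) by (simp add: part_eq)
  have bfadm: "bf_leakage (g \<circ> X) Y = log 2 (real (card (g ` range X)))"
    if g: "\<forall>y \<in> range Y. card (cond_range (g \<circ> X) Y y) = 1" for g :: "'x \<Rightarrow> nat"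
  proof -
    have "(\<lambda>y. card (cond_range (g \<circ> X) Y y)) ` range Y = {1}" 
    proof
      show "(\<lambda>y. card (cond_range (g \<circ> X) Y y)) ` range Y \<subseteq> {1}" using g by blast
      show "{1} \<subseteq> (\<lambda>y. card (cond_range (g \<circ> X) Y y)) ` range Y"
      proof -
        obtain w :: 'w where "True" by simp
        have "card (cond_range (g \<circ> X) Y (Y w)) = 1" using g by blast
        then show ?thesis by (metis (no_types, lifting) empty_subsetI insert_subset rangeI image_eqI)
      qed
    qed
    then show ?thesis unfolding bf_leakage_def by (simp add: image_comp)
  qed
  have upper: "card (g ` range X) \<le> card ?P"
    if g: "\<forall>y \<in> range Y. card (cond_range (g \<circ> X) Y y) = 1" for g :: "'x \<Rightarrow> nat"
  proof -
    have c: "\<forall>y\<in>range Y. \<forall>a\<in>cond_range X Y y. \<forall>b\<in>cond_range X Y y. g a = g b"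
      using g card1_const by (metis cond_range_comp)
    define \<phi> where "\<phi> C = g (SOME x. x \<in> range X \<and> cls X Y x = C)" for C
    have "g x = \<phi> (cls X Y x)" if x: "x \<in> range X" for x
    proof -
      let ?x0 = "SOME x0. x0 \<in> range X \<and> cls X Y x0 = cls X Y x"
      have x0: "?x0 \<in> range X \<and> cls X Y ?x0 = cls X Y x"
        by (rule someI[of _ x]) (use x in auto)
      then have "?x0 \<in> cls X Y x" using oc_refl[of ?x0 X Y] by (auto simp: cls_def)
      then have "overlap_connected X Y x ?x0" by (simp add: cls_def)
      then show ?thesis using oc_const[OF _ c] unfolding \<phi>_def by blast
    qed
    then have "g ` range X = \<phi> ` ?P" unfolding part_eq by (auto simp: image_iff)
    then show ?thesis using card_image_le[OF finP, of \<phi>] by simp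
  qed
  obtain f :: "'x set \<Rightarrow> nat" where f: "inj_on f ?P"
    using finP by (metis finite_imp_inj_to_nat_seg)
  define g0 where "g0 x = f (cls X Y x)" for x
  have clseq: "cls X Y x1 = cls X Y x2"
    if "x1 \<in> cond_range X Y y" "x2 \<in> cond_range X Y y" "y \<in> range Y" for x1 x2 y
    unfolding cls_def using oc_prepend[OF _ that(1,2,3)] oc_prepend[OF _ that(2,1,3)] by blast
  have g0adm: "\<forall>y \<in> range Y. card (cond_range (g0 \<circ> X) Y y) = 1"
  proof
    fix y assume y: "y \<in> range Y"
    obtain x1 where x1: "x1 \<in> cond_range X Y y" using cond_range_ne[OF y, of X] by auto
    have "\<forall>a\<in>cond_range X Y y. g0 a = g0 x1" using clseq[OF _ x1 y] unfolding g0_def by metis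
    then have "g0 ` cond_range X Y y = {g0 x1}" using x1 by blast
    then show "card (cond_range (g0 \<circ> X) Y y) = 1" by (simp add: cond_range_comp)
  qed
  have "g0 ` range X = f ` ?P" unfolding part_eq g0_def image_image by (rule refl)
  then have cg0: "card (g0 ` range X) = card ?P" using card_image[OF f] by simp
  have Smax: "Sup ?S = maximin_info X Y"
  proof (rule cSup_eq_maximum)
    show "maximin_info X Y \<in> ?S"
      using g0adm bfadm[OF g0adm] cg0 unfolding maximin_info_def by force
  next
    fix v assume "v \<in> ?S"
    then obtain g :: "'x \<Rightarrow> nat" where g: "\<forall>y \<in> range Y. card (cond_range (g \<circ> X) Y y) = 1"
      and v: "v = bf_leakage (g \<circ> X) Y" by blast
    have "card (g ` range X) > 0" using assms(1) by (simp add: card_gt_0_iff)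
    then show "v \<le> maximin_info X Y" unfolding v bfadm[OF g] maximin_info_def
      using upper[OF g] by simp
  qed
  have "Sup ?S \<le> max_bf_leakage X Y"
    unfolding max_bf_leakage_def
  proof (rule cSup_subset_mono)
    show "?S \<noteq> {}" using g0adm by blast
    show "?S \<subseteq> {bf_leakage (g \<circ> X) Y | g :: 'x \<Rightarrow> nat. True}" by blast
    show "bdd_above {bf_leakage (g \<circ> X) Y | g :: 'x \<Rightarrow> nat. True}"
    proof (rule bdd_aboveI[of _ "log 2 (real (card (range X)))"])
      fix v assume "v \<in> {bf_leakage (g \<circ> X) Y | g :: 'x \<Rightarrow> nat. True}"
      then obtain g :: "'x \<Rightarrow> nat" where v: "v = bf_leakage (g \<circ> X) Y" by blast
      let ?M = "Min ((\<lambda>y. card (cond_range (g \<circ> X) Y y)) ` range Y)"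
      have "?M \<in> (\<lambda>y. card (cond_range (g \<circ> X) Y y)) ` range Y"
        using assms(2) by (intro Min_in) auto
      then obtain y where y: "y \<in> range Y" and M: "?M = card (cond_range (g \<circ> X) Y y)" by auto
      have "finite (cond_range (g \<circ> X) Y y)" unfolding cond_range_comp
        by (rule finite_imageI, rule finite_subset[OF cond_range_sub assms(1)])
      moreover have "cond_range (g \<circ> X) Y y \<noteq> {}" using cond_range_ne[OF y] .
      ultimately have M1: "?M \<ge> 1" unfolding M
        by (simp add: Suc_leI card_gt_0_iff)
      have rg: "range (g \<circ> X) = g ` range X" by auto
      have a1: "card (g ` range X) \<ge> 1" using assms(1) by (simp add: Suc_leI card_gt_0_iff)
      have a2: "card (g ` range X) \<le> card (range X)" using card_image_le[OF assms(1)] .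
      have "real (card (g ` range X)) / real ?M \<le> real (card (range X))"
      proof -
        have "real (card (g ` range X)) / real ?M \<le> real (card (g ` range X))"
          using M1 a1 by (simp add: divide_le_eq)
        then show ?thesis using a2 by linarith
      qed
      moreover have "0 < real (card (g ` range X)) / real ?M" using M1 a1 by simp
      ultimately show "v \<le> log 2 (real (card (range X)))"
        unfolding v bf_leakage_def rg by simp
    qed
  qed
  then show ?thesis using Smax by simp
qed

end
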